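(* Let $P_0>0$, $\sigma>0$, $t>0$, $0<\mathbb{P}_l<\mathbb{P}_u$, $0<\mathbb{S}_l<\mathbb{S}_u$. Suppose $P_t=P_0\exp(\sigma W_t-\sigma^2t/2)$ for a standard Brownian motion $W$ (geometric Brownian motion with volatility $\sigma$ and zero drift, i.e. zero risk-free rate under the risk-neutral measure). With $\mathrm{UIL}^{\mathtt{R}}$ and $\mathrm{UIL}^{\mathtt{L}}$ defined as in the context, $$\mathbb{E}[\mathrm{UIL}^{\mathtt{R}}]=2\sqrt{P_0}e^{-\sigma^2t/8}\big(N(d_l+\sigma\sqrt t/2)-N(d_u+\sigma\sqrt t/2)\big)-\sqrt{\mathbb{P}_l}N(d_l)+\sqrt{\mathbb{P}_u}N(d_u)-\tfrac{P_0}{\sqrt{\mathbb{P}_l}}N(d_l+\sigma\sqrt t)+\tfrac{P_0}{\sqrt{\mathbb{P}_u}}N(d_u+\sigma\sqrt t),$$ $$\mathbb{E}[\mathrm{UIL}^{\mathtt{L}}]=2\sqrt{P_0}e^{-\sigma^2t/8}\big(-N(-q_l-\sigma\sqrt t/2)+N(-q_u-\sigma\sqrt t/2)\big)+\sqrt{\mathbb{S}_l}N(-q_l)-\sqrt{\mathbb{S}_u}N(-q_u)+\tfrac{P_0}{\sqrt{\mathbb{S}_l}}N(-q_l-\sigma\sqrt t)-\tfrac{P_0}{\sqrt{\mathbb{S}_u}}N(-q_u-\sigma\sqrt t),$$ where $N$ is the standard normal CDF and $d_u=\frac{\ln(P_0/\mathbb{P}_u)-\sigma^2t/2}{\sigma\sqrt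 t}$, $d_l=\frac{\ln(P_0/\mathbb{P}_l)-\sigma^2t/2}{\sigma\sqrt t}$, $q_u=\frac{\ln(P_0/\mathbb{S}_u)-\sigma^2t/2}{\sigma\sqrt t}$, $q_l=\frac{\ln(P_0/\mathbb{S}_l)-\sigma^2t/2}{\sigma\sqrt t}$.
   Context: Unit impermanent losses per liquidity for a price $P_t>0$: $\mathrm{UIL}^{\mathtt{R}}=\big(2\sqrt{P_t}-\tfrac{P_t}{\sqrt{\mathbb{P}_l}}-\sqrt{\mathbb{P}_l}\big)\mathbf{1}_{\{\mathbb{P}_l\le P_t\le \mathbb{P}_u\}}+\big(\sqrt{\mathbb{P}_u}-\sqrt{\mathbb{P}_l}-(\tfrac{1}{\sqrt{\mathbb{P}_l}}-\tfrac{1}{\sqrt{\mathbb{P}_u}})P_t\big)\mathbf{1}_{\{P_t\ge \mathbb{P}_u\}}$ (liquidity supplied on $[\mathbb{P}_l,\mathbb{P}_u]$ to the right of the initial price), and $\mathrm{UIL}^{\mathtt{L}}=\big(2\sqrt{P_t}-\tfrac{P_t}{\sqrt{\mathbb{S}_u}}-\sqrt{\mathbb{S}_u}\big)\mathbf{1}_{\{\mathbb{S}_l\le P_t\le \mathbb{S}_u\}}+\big((\tfrac{1}{\sqrt{\mathbb{S}_l}}-\tfrac{1}{\sqrt{\mathbb{S}_u}})P_t-\sqrt{\mathbb{S}_u}+\sqrt{\mathbb{S}_l}\big)\mathbf{1}_{\{P_t\le \mathbb{S}_l\}}$ (liquidity supplied on $[\mathbb{S}_l,\mathbb{S}_u]$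 to the left of the initial price). The expectation $\mathbb{E}$ is taken with respect to the law of $P_t$ specified in the claim. *)

theory Defs
  imports "HOL-Probability.Probability"
begin

definition std_normal_cdf :: "real \<Rightarrow> real" where
  "std_normal_cdf x = measure (density lborel std_normal_density) {..x}"

text \<open>Unit impermanent loss, liquidity on [Pl, Pu] to the right of the initial price.\<close>
definition UIL_R :: "real \<Rightarrow> real \<Rightarrow> real \<Rightarrow> real" where
  "UIL_R Pl Pu p =
     (2 * sqrt p - p / sqrt Pl - sqrt Pl) * indicator {Pl..Pu} p
   + (sqrt Pu - sqrt Pl - (1 / sqrt Pl - 1 / sqrt Pu) * p) * indicator {Pu..} p"

text \<open>Unit impermanent loss, liquidity on [Sl, Su] to the left of the initial price.\<close>
definition UIL_L :: "real \<Rightarrow> real \<Rightarrow> real \<Rightarrow> real" where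
  "UIL_L Sl Su p =
     (2 * sqrt p - p / sqrt Su - sqrt Su) * indicator {Sl..Su} p
   + ((1 / sqrt Sl - 1 / sqrt Su) * p - sqrt Su + sqrt Sl) * indicator {..Sl} p"

end

theory Submission
  imports Defs
begin

lemma cdf_int: "has_bochner_integral lborel (\<lambda>z. std_normal_density z * indicator {..x} z) (std_normal_cdf x)"
proof -
  have i: "integrable lborel (\<lambda>z. std_normal_density z * indicator {..x} z)"
    by (intro integrable_real_mult_indicator) auto
  have "emeasure (density lborel std_normal_density) {..x} = (\<integral>\<^sup>+z. ennreal (std_normal_density z * indicator {..x} z) \<partial>lborel)"
    by (subst emeasure_density) (auto intro!: nn_integral_cong simp: indicator_def)
  also have "\<dots> = ennreal (\<integral>z. std_normal_density z * indicator {..x} z \<partial>lborel)"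
    using i by (intro nn_integral_eq_integral) auto
  finally have "std_normal_cdf x = (\<integral>z. std_normal_density z * indicator {..x} z \<partial>lborel)"
    unfolding std_normal_cdf_def measure_def
    by (simp add: integral_nonneg_AE)
  with i show ?thesis by (simp add: has_bochner_integral_integrable)
qed

lemma phi_shift: "std_normal_density z * exp (b * z) = exp (b^2/2) * std_normal_density (z - b)"
proof -
  have e: "- z\<^sup>2 / 2 + b * z = b^2/2 + - (z - b)\<^sup>2 / 2"
    by (simp add: power2_eq_square field_simps)
  have "exp (- z\<^sup>2 / 2) * exp (b * z) = exp (b^2/2) * exp (- (z - b)\<^sup>2 / 2)"
    by (simp only: mult_exp_exp e)
  then show ?thesis unfolding std_normal_density_def by simp
qed

lemma K2: "has_bochner_integral lborel (\<lambda>z. std_normal_density z * (exp (b * z) * indicator {..c} z))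
            (exp (b^2/2) * std_normal_cdf (c - b))"
proof -
  have "has_bochner_integral lborel (\<lambda>z. std_normal_density z * indicator {..c-b} z) (std_normal_cdf (c - b))"
    by (rule cdf_int)
  then have "has_bochner_integral lborel (\<lambda>x. (\<lambda>z. std_normal_density (z - b) * indicator {..c} z) (b + 1 * x)) (std_normal_cdf (c - b) /\<^sub>R \<bar>1\<bar>)"
    by (rule has_bochner_integral_cong[THEN iffD1, rotated -1]) (auto simp: indicator_def)
  then have "has_bochner_integral lborel (\<lambda>z. std_normal_density (z - b) * indicator {..c} z) (std_normal_cdf (c - b))"
    using lborel_has_bochner_integral_real_affine_iff[of 1 "\<lambda>z. std_normal_density (z - b) * indicator {..c} z" "std_normal_cdf (c - b)" b]
    by simp
  then have "has_bochner_integral lborel (\<lambda>z. exp (b^2/2) * (std_normal_density (z - b) * indicator {..c} z)) (exp (b^2/2) * std_normal_cdf (c - b))"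
    by (rule has_bochner_integral_mult_right)
  then show ?thesis
    by (rule has_bochner_integral_cong[THEN iffD1, rotated -1]) (auto simp: phi_shift[symmetric])
qed

lemma phi_neg[simp]: "std_normal_density (- x) = std_normal_density x"
  unfolding std_normal_density_def by simp

lemma K2s: "has_bochner_integral lborel (\<lambda>z. std_normal_density z * (exp (b * z) * indicator {..<c} z))
            (exp (b^2/2) * std_normal_cdf (c - b))"
  using K2[of b c]
  by (subst has_bochner_integral_cong_AE[rotated 2])
     (auto intro: eventually_mono[OF AE_lborel_singleton[of c]] simp: indicator_def)

lemma K1: "has_bochner_integral lborel (\<lambda>z. std_normal_density z * (exp (b * z) * indicator {c..} z))
            (exp (b^2/2) * std_normal_cdf (b - c))"
proof -
  have "has_bochner_integral lborel (\<lambda>z. std_normal_density z * (exp ((-b) * z) * indicator {..-c} z))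
            (exp ((-b)^2/2) * std_normal_cdf (-c - (-b)))" by (rule K2)
  then have "has_bochner_integral lborel (\<lambda>x. (\<lambda>z. std_normal_density z * (exp (b * z) * indicator {c..} z)) (0 + (-1) * x))
            (exp (b^2/2) * std_normal_cdf (b - c) /\<^sub>R \<bar>-1\<bar>)"
    by (rule has_bochner_integral_cong[THEN iffD1, rotated -1]) (auto simp: indicator_def)
  then show ?thesis
    using lborel_has_bochner_integral_real_affine_iff[of "-1" "\<lambda>z. std_normal_density z * (exp (b * z) * indicator {c..} z)" _ 0]
    by simp
qed

lemma K1s: "has_bochner_integral lborel (\<lambda>z. std_normal_density z * (exp (b * z) * indicator {c<..} z))
            (exp (b^2/2) * std_normal_cdf (b - c))"
  using K1[of b c]
  by (subst has_bochner_integral_cong_AE[rotated 2])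
     (auto intro: eventually_mono[OF AE_lborel_singleton[of c]] simp: indicator_def)

lemma UIL_R_meas[measurable]: "UIL_R a b \<in> borel_measurable borel"
  unfolding UIL_R_def by measurable
lemma UIL_L_meas[measurable]: "UIL_L a b \<in> borel_measurable borel"
  unfolding UIL_L_def by measurable

lemma thr_le:
  assumes "(K::real) > 0" "P0 > 0" "s > 0"
  shows "(K \<le> P0 * exp (s * z - s\<^sup>2 / 2)) \<longleftrightarrow> (ln K - ln P0 + s\<^sup>2/2) / s \<le> z"
proof -
  have "(K \<le> P0 * exp (s * z - s\<^sup>2 / 2)) \<longleftrightarrow> ln K \<le> ln (P0 * exp (s * z - s\<^sup>2 / 2))"
    using assms by (subst ln_le_cancel_iff) auto
  also have "\<dots> \<longleftrightarrow> ln K - ln P0 + s\<^sup>2/2 \<le> s * z"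
    using assms by (simp add: ln_mult) linarith
  also have "\<dots> \<longleftrightarrow> (ln K - ln P0 + s\<^sup>2/2) / s \<le> z"
    using assms by (simp add: pos_divide_le_eq mult.commute)
  finally show ?thesis .
qed

lemma thr_ge:
  assumes "(K::real) > 0" "P0 > 0" "s > 0"
  shows "(P0 * exp (s * z - s\<^sup>2 / 2) \<le> K) \<longleftrightarrow> z \<le> (ln K - ln P0 + s\<^sup>2/2) / s"
proof -
  have "(P0 * exp (s * z - s\<^sup>2 / 2) \<le> K) \<longleftrightarrow> ln (P0 * exp (s * z - s\<^sup>2 / 2)) \<le> ln K"
    using assms by (subst ln_le_cancel_iff) auto
  also have "\<dots> \<longleftrightarrow> s * z \<le> ln K - ln P0 + s\<^sup>2/2"
    using assms by (simp add: ln_mult) linarith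
  also have "\<dots> \<longleftrightarrow> z \<le> (ln K - ln P0 + s\<^sup>2/2) / s"
    using assms by (simp add: pos_le_divide_eq mult.commute)
  finally show ?thesis .
qed

lemma algR:
  fixes A ea c B eb P e0 q r n1 n2 m1 m2 k1 k2 :: real
  assumes "A * ea = c" "B * eb = P" "e0 = 1" "q > 0" "r > 0"
  shows "2*A*(ea*n1 - ea*n2) - B/q*(eb*m1 - eb*m2) - q*(e0*k1 - e0*k2) + (r - q)*(e0*k2)
           - (1/q - 1/r)*B*(eb*m2) = 2*c*(n1 - n2) - q*k1 + r*k2 - P/q*m1 + P/r*m2"
  using assms by (auto simp: field_simps)

lemma algL:
  fixes A ea c B eb P e0 q r n1 n2 m1 m2 k1 k2 :: real
  assumes "A * ea = c" "B * eb = P" "e0 = 1" "q > 0" "r > 0"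
  shows "2*A*(ea*n2 - ea*n1) - B/r*(eb*m2 - eb*m1) - r*(e0*k2 - e0*k1) + (1/q - 1/r)*B*(eb*m1)
           + (q - r)*(e0*k1) = 2*c*(- n1 + n2) + q*k1 - r*k2 + P/q*m1 - P/r*m2"
  using assms by (auto simp: field_simps)

lemma sqrt_exp: "sqrt (exp y) = exp (y / 2)"
  by (rule real_sqrt_unique) (auto simp: power2_eq_square mult_exp_exp)

theorem corollary1:
  fixes M :: "'a measure" and W :: "'a \<Rightarrow> real"
    and P0 \<sigma> t Pl Pu Sl Su :: real
  assumes "prob_space M"
    and "distributed M lborel W (normal_density 0 (sqrt t))"
    and "P0 > 0" and "\<sigma> > 0" and "t > 0"
    and "0 < Pl" and "Pl < Pu" and "0 < Sl" and "Sl < Su"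
  defines "Pt \<equiv> (\<lambda>\<omega>. P0 * exp (\<sigma> * W \<omega> - \<sigma>\<^sup>2 * t / 2))"
    and "du \<equiv> (ln (P0 / Pu) - \<sigma>\<^sup>2 * t / 2) / (\<sigma> * sqrt t)"
    and "dl \<equiv> (ln (P0 / Pl) - \<sigma>\<^sup>2 * t / 2) / (\<sigma> * sqrt t)"
    and "qu \<equiv> (ln (P0 / Su) - \<sigma>\<^sup>2 * t / 2) / (\<sigma> * sqrt t)"
    and "ql \<equiv> (ln (P0 / Sl) - \<sigma>\<^sup>2 * t / 2) / (\<sigma> * sqrt t)"
  shows "(prob_space.expectation M (\<lambda>\<omega>. UIL_R Pl Pu (Pt \<omega>)) =
           2 * sqrt P0 * exp (- \<sigma>\<^sup>2 * t / 8)
             * (std_normal_cdf (dl + \<sigma> * sqrt t / 2) - std_normal_cdf (du + \<sigma> * sqrt t / 2))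
           - sqrt Pl * std_normal_cdf dl + sqrt Pu * std_normal_cdf du
           - P0 / sqrt Pl * std_normal_cdf (dl + \<sigma> * sqrt t)
           + P0 / sqrt Pu * std_normal_cdf (du + \<sigma> * sqrt t))
    \<and> (prob_space.expectation M (\<lambda>\<omega>. UIL_L Sl Su (Pt \<omega>)) =
           2 * sqrt P0 * exp (- \<sigma>\<^sup>2 * t / 8)
             * (- std_normal_cdf (- ql - \<sigma> * sqrt t / 2) + std_normal_cdf (- qu - \<sigma> * sqrt t / 2))
           + sqrt Sl * std_normal_cdf (- ql) - sqrt Su * std_normal_cdf (- qu)
           + P0 / sqrt Sl * std_normal_cdf (- ql - \<sigma> * sqrt t)
           - P0 / sqrt Su * std_normal_cdf (- qu - \<sigma> * sqrt t))"
proof -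
  interpret prob_space M by fact
  define s where "s = \<sigma> * sqrt t"
  have s0: "s > 0" using assms by (simp add: s_def)
  have s2: "s\<^sup>2 = \<sigma>\<^sup>2 * t" using assms by (simp add: s_def power_mult_distrib)
  define Z where "Z = (\<lambda>\<omega>. W \<omega> / sqrt t)"
  have Zd: "distributed M lborel Z std_normal_density"
    using assms(2) normal_standard_normal_convert[of "sqrt t" W 0] assms(5) by (simp add: Z_def)
  have PtZ: "Pt \<omega> = P0 * exp (s * Z \<omega> - s\<^sup>2 / 2)" for \<omega>
    using assms(5) by (simp add: Pt_def Z_def s_def power_mult_distrib)
  define A where "A = sqrt P0 * exp (- s\<^sup>2 / 4)"
  define B where "B = P0 * exp (- s\<^sup>2 / 2)"
  define F where "F = (\<lambda>b S z. std_normal_density z * (exp (b * z) * indicator S z))"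
  have sq: "sqrt (P0 * exp (s * z - s\<^sup>2 / 2)) = A * exp (s/2 * z)" for z
  proof -
    have "exp ((s * z - s\<^sup>2 / 2) / 2) = exp (- s\<^sup>2 / 4) * exp (s/2 * z)"
      by (simp add: mult_exp_exp field_simps)
    then show ?thesis by (simp add: A_def real_sqrt_mult sqrt_exp)
  qed
  have pp: "P0 * exp (s * z - s\<^sup>2 / 2) = B * exp (s * z)" for z
    by (simp add: B_def mult_exp_exp)
  have hA: "A * exp ((s/2)\<^sup>2/2) = sqrt P0 * exp (- \<sigma>\<^sup>2 * t / 8)"
  proof -
    have "exp (- s\<^sup>2 / 4) * exp ((s/2)\<^sup>2/2) = exp (- \<sigma>\<^sup>2 * t / 8)"
      by (simp add: mult_exp_exp s2[symmetric] power_divide) 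
    then show ?thesis by (simp add: A_def mult.assoc)
  qed
  have hB: "B * exp (s\<^sup>2/2) = P0"
    by (simp add: B_def mult.assoc mult_exp_exp)
  have e0: "exp ((0::real)\<^sup>2/2) = 1" by simp

  define al where "al = (ln Pl - ln P0 + s\<^sup>2/2) / s"
  define au where "au = (ln Pu - ln P0 + s\<^sup>2/2) / s"
  have lu: "al \<le> au" using assms s0 unfolding al_def au_def
    by (intro divide_right_mono) auto
  have indR1: "(indicator {Pl..Pu} (P0 * exp (s * z - s\<^sup>2 / 2)) :: real) = indicator {al..} z - indicator {au<..} z" for z :: real
    using thr_le[of Pl P0 s z] thr_ge[of Pu P0 s z] assms s0 lu
    by (auto simp: indicator_def al_def au_def)
  have indR2: "(indicator {Pu..} (P0 * exp (s * z - s\<^sup>2 / 2)) :: real) = indicator {au..} z" for z :: real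
    using thr_le[of Pu P0 s z] assms s0 by (auto simp: indicator_def au_def)
  have ptR: "std_normal_density z * UIL_R Pl Pu (P0 * exp (s * z - s\<^sup>2 / 2)) =
     2*A*(F (s/2) {al..} z - F (s/2) {au<..} z) - B/sqrt Pl*(F s {al..} z - F s {au<..} z)
     - sqrt Pl*(F 0 {al..} z - F 0 {au<..} z) + (sqrt Pu - sqrt Pl)*(F 0 {au..} z)
     - (1/sqrt Pl - 1/sqrt Pu)*B*(F s {au..} z)" for z
    unfolding UIL_R_def indR1 indR2 sq unfolding pp F_def by (simp add: algebra_simps diff_divide_distrib)
  have HR: "has_bochner_integral lborel (\<lambda>z.
     2*A*(F (s/2) {al..} z - F (s/2) {au<..} z) - B/sqrt Pl*(F s {al..} z - F s {au<..} z)
     - sqrt Pl*(F 0 {al..} z - F 0 {au<..} z) + (sqrt Pu - sqrt Pl)*(F 0 {au..} z)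
     - (1/sqrt Pl - 1/sqrt Pu)*B*(F s {au..} z))
     (2*A*(exp ((s/2)\<^sup>2/2) * std_normal_cdf (s/2 - al) - exp ((s/2)\<^sup>2/2) * std_normal_cdf (s/2 - au))
      - B/sqrt Pl*(exp (s\<^sup>2/2) * std_normal_cdf (s - al) - exp (s\<^sup>2/2) * std_normal_cdf (s - au))
      - sqrt Pl*(exp (0\<^sup>2/2) * std_normal_cdf (0 - al) - exp (0\<^sup>2/2) * std_normal_cdf (0 - au))
      + (sqrt Pu - sqrt Pl)*(exp (0\<^sup>2/2) * std_normal_cdf (0 - au))
      - (1/sqrt Pl - 1/sqrt Pu)*B*(exp (s\<^sup>2/2) * std_normal_cdf (s - au)))"
    (is "has_bochner_integral _ _ ?VR")
    unfolding F_def
    by (intro has_bochner_integral_add has_bochner_integral_diff has_bochner_integral_mult_right K1 K1s)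
  have dlal: "dl = - al" and duau: "du = - au"
    using assms s0 by (simp_all add: dl_def al_def du_def au_def s_def s2[unfolded s_def] ln_div field_simps)
  have ER: "expectation (\<lambda>\<omega>. UIL_R Pl Pu (Pt \<omega>)) = (\<integral>z. std_normal_density z * UIL_R Pl Pu (P0 * exp (s * z - s\<^sup>2 / 2)) \<partial>lborel)"
    by (subst distributed_integral[OF Zd]) (auto simp: PtZ)
  have R: "expectation (\<lambda>\<omega>. UIL_R Pl Pu (Pt \<omega>)) =
           2 * sqrt P0 * exp (- \<sigma>\<^sup>2 * t / 8)
             * (std_normal_cdf (dl + \<sigma> * sqrt t / 2) - std_normal_cdf (du + \<sigma> * sqrt t / 2))
           - sqrt Pl * std_normal_cdf dl + sqrt Pu * std_normal_cdf du
           - P0 / sqrt Pl * std_normal_cdf (dl + \<sigma> * sqrt t)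
           + P0 / sqrt Pu * std_normal_cdf (du + \<sigma> * sqrt t)"
  proof -
    have a: "s/2 - al = dl + \<sigma> * sqrt t / 2" "s/2 - au = du + \<sigma> * sqrt t / 2"
      "0 - al = dl" "0 - au = du" "s - al = dl + \<sigma> * sqrt t" "s - au = du + \<sigma> * sqrt t"
      using dlal duau by (simp_all add: s_def)
    have "expectation (\<lambda>\<omega>. UIL_R Pl Pu (Pt \<omega>)) = ?VR"
      unfolding ER ptR by (rule has_bochner_integral_integral_eq[OF HR])
    also have "?VR = 2*(sqrt P0 * exp (- \<sigma>\<^sup>2 * t / 8))*(std_normal_cdf (s/2 - al) - std_normal_cdf (s/2 - au))
       - sqrt Pl * std_normal_cdf (0 - al) + sqrt Pu * std_normal_cdf (0 - au)
       - P0/sqrt Pl * std_normal_cdf (s - al) + P0/sqrt Pu * std_normal_cdf (s - au)"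
      by (rule algR[OF hA hB e0]) (use assms in auto)
    finally show ?thesis unfolding a by (simp only: mult.assoc)
  qed

  define bl where "bl = (ln Sl - ln P0 + s\<^sup>2/2) / s"
  define bu where "bu = (ln Su - ln P0 + s\<^sup>2/2) / s"
  have lu': "bl \<le> bu" using assms s0 unfolding bl_def bu_def
    by (intro divide_right_mono) auto
  have indL1: "(indicator {Sl..Su} (P0 * exp (s * z - s\<^sup>2 / 2)) :: real) = indicator {..bu} z - indicator {..<bl} z" for z :: real
    using thr_le[of Sl P0 s z] thr_ge[of Su P0 s z] assms s0 lu'
    by (auto simp: indicator_def bl_def bu_def)
  have indL2: "(indicator {..Sl} (P0 * exp (s * z - s\<^sup>2 / 2)) :: real) = indicator {..bl} z" for z :: real
    using thr_ge[of Sl P0 s z] assms s0 by (auto simp: indicator_def bl_def)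
  have ptL: "std_normal_density z * UIL_L Sl Su (P0 * exp (s * z - s\<^sup>2 / 2)) =
     2*A*(F (s/2) {..bu} z - F (s/2) {..<bl} z) - B/sqrt Su*(F s {..bu} z - F s {..<bl} z)
     - sqrt Su*(F 0 {..bu} z - F 0 {..<bl} z) + (1/sqrt Sl - 1/sqrt Su)*B*(F s {..bl} z)
     + (sqrt Sl - sqrt Su)*(F 0 {..bl} z)" for z
    unfolding UIL_L_def indL1 indL2 sq unfolding pp F_def by (simp add: algebra_simps diff_divide_distrib)
  have HL: "has_bochner_integral lborel (\<lambda>z.
     2*A*(F (s/2) {..bu} z - F (s/2) {..<bl} z) - B/sqrt Su*(F s {..bu} z - F s {..<bl} z)
     - sqrt Su*(F 0 {..bu} z - F 0 {..<bl} z) + (1/sqrt Sl - 1/sqrt Su)*B*(F s {..bl} z)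
     + (sqrt Sl - sqrt Su)*(F 0 {..bl} z))
     (2*A*(exp ((s/2)\<^sup>2/2) * std_normal_cdf (bu - s/2) - exp ((s/2)\<^sup>2/2) * std_normal_cdf (bl - s/2))
      - B/sqrt Su*(exp (s\<^sup>2/2) * std_normal_cdf (bu - s) - exp (s\<^sup>2/2) * std_normal_cdf (bl - s))
      - sqrt Su*(exp (0\<^sup>2/2) * std_normal_cdf (bu - 0) - exp (0\<^sup>2/2) * std_normal_cdf (bl - 0))
      + (1/sqrt Sl - 1/sqrt Su)*B*(exp (s\<^sup>2/2) * std_normal_cdf (bl - s))
      + (sqrt Sl - sqrt Su)*(exp (0\<^sup>2/2) * std_normal_cdf (bl - 0)))"
    (is "has_bochner_integral _ _ ?VL")
    unfolding F_def
    by (intro has_bochner_integral_add has_bochner_integral_diff has_bochner_integral_mult_right K2 K2s)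
  have qlbl: "ql = - bl" and qubu: "qu = - bu"
    using assms s0 by (simp_all add: ql_def bl_def qu_def bu_def s_def s2[unfolded s_def] ln_div field_simps)
  have EL: "expectation (\<lambda>\<omega>. UIL_L Sl Su (Pt \<omega>)) = (\<integral>z. std_normal_density z * UIL_L Sl Su (P0 * exp (s * z - s\<^sup>2 / 2)) \<partial>lborel)"
    by (subst distributed_integral[OF Zd]) (auto simp: PtZ)
  have L: "expectation (\<lambda>\<omega>. UIL_L Sl Su (Pt \<omega>)) =
           2 * sqrt P0 * exp (- \<sigma>\<^sup>2 * t / 8)
             * (- std_normal_cdf (- ql - \<sigma> * sqrt t / 2) + std_normal_cdf (- qu - \<sigma> * sqrt t / 2))
           + sqrt Sl * std_normal_cdf (- ql) - sqrt Su * std_normal_cdf (- qu)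
           + P0 / sqrt Sl * std_normal_cdf (- ql - \<sigma> * sqrt t)
           - P0 / sqrt Su * std_normal_cdf (- qu - \<sigma> * sqrt t)"
  proof -
    have a: "bu - s/2 = - qu - \<sigma> * sqrt t / 2" "bl - s/2 = - ql - \<sigma> * sqrt t / 2"
      "bu - 0 = - qu" "bl - 0 = - ql" "bu - s = - qu - \<sigma> * sqrt t" "bl - s = - ql - \<sigma> * sqrt t"
      using qlbl qubu by (simp_all add: s_def)
    have "expectation (\<lambda>\<omega>. UIL_L Sl Su (Pt \<omega>)) = ?VL"
      unfolding EL ptL by (rule has_bochner_integral_integral_eq[OF HL])
    also have "?VL = 2*(sqrt P0 * exp (- \<sigma>\<^sup>2 * t / 8))*(- std_normal_cdf (bl - s/2) + std_normal_cdf (bu - s/2))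
       + sqrt Sl * std_normal_cdf (bl - 0) - sqrt Su * std_normal_cdf (bu - 0)
       + P0/sqrt Sl * std_normal_cdf (bl - s) - P0/sqrt Su * std_normal_cdf (bu - s)"
      by (rule algL[OF hA hB e0]) (use assms in auto)
    finally show ?thesis unfolding a by (simp only: mult.assoc)
  qed
  show ?thesis using R L by simp
qed

end
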